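(* Let $\mathbf t:\mathcal D\to\mathcal T$ be a logical refinement system with enough residuals and pullbacks, and let $W$ be a monoid in $\mathcal T$ with multiplication $p:W\otimes W\to W$. Then the functor $Q\mapsto Q^{+}$ from the fiber $\mathcal D_W$ to $[(W^{+})^{op},\mathbf{Set}]$ preserves residuals: for all $P,Q,R\sqsubset W$ there are natural isomorphisms of presheaves on $W^{+}$ $(P\multimap_WR)^{+}\cong P^{+}\multimap_{W^{+}}R^{+}$ and $(R\mathbin{\circ\!\!-}_WQ)^{+}\cong R^{+}\mathbin{\circ\!\!-}_{W^{+}}Q^{+}$.
   Context: A refinement system is a functor $\mathbf{t}:\mathcal{D}\to\mathcal{T}$; composition is diagrammatic. Write $P\sqsubset A$ if $\mathbf t(P)=A$; a derivation of $P\Rightarrow_cQ$ is a morphism $\alpha:P\to Q$ with $\mathbf t(\alpha)=c$. A pullback of $Q\sqsubset B$ along $c:A\to B$ is $c^*Q\sqsubset A$ with a derivation $\lambda$ of $c^*Q\Rightarrow_cQ$ such that post-composition with $\lambda$ is a bijection from derivations of $P\Rightarrow_dc^*Q$ to derivations of $P\Rightarrow_{d;c}Q$ for all $P\sqsubset X$, $d:X\to A$. A logical refinement system is a strict monoidal functor $\mathbf t$ between monoidal categories such that whenever a left residual $P\backslash R$ (right adjoint of $P\otimes-$ at $R$) or right residual $R/Q$ (right adjoint of $-\otimes Q$ at $R$) exists in $\mathcal D$, $\mathbf t$ maps it, with its evaluation map, to a corresponding residual in $\mathcal T$. "Enough residuals and pullbacks" means that the residuals $P\backslash R$, $R/Q$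 in $\mathcal D$ (for $P,Q,R\sqsubset W$), the residuals $W\backslash W$, $W/W$ in $\mathcal T$, and the pullbacks below exist. Let $\lambda p:W\to W\backslash W$ and $\rho p:W\to W/W$ be the left and right curryings of $p$. The fiber $\mathcal D_W$ (refinements of $W$, derivations over $\mathrm{id}_W$) has residuals $P\multimap_WR:=(\lambda p)^*(P\backslash R)$ and $R\mathbin{\circ\!\!-}_WQ:=(\rho p)^*(R/Q)$. Positive representation: $W^{+}$ has objects $(P,c)$, $P\sqsubset X$, $c:X\to W$, morphisms $(P_1,c_1)\to(P_2,c_2)$ the derivations of $P_1\Rightarrow_eP_2$ with $c_1=e;c_2$; for $Q\sqsubset W$, $Q^{+}:(W^{+})^{op}\to\mathbf{Set}$ sends $(P,c)$ to the set of derivations of $P\Rightarrow_cQ$, acting by precomposition. $W^{+}$ carries the functor $\otimes:W^{+}\times W^{+}\to W^{+}$, $((P_1,c_1),(P_2,c_2))\mapsto(P_1\otimes P_2,(c_1\otimes c_2);p)$. For presheaves $\phi,\psi,\omega$ on $W^{+}$: $(\phi\multimap_{W^{+}}\omega)(y)$ is the set of natural transformations $\phi\Rightarrow\omega((-)\otimes y)$, and $(\omega\mathbin{\circ\!\!-}_{W^{+}}\psi)(x)$ is the set of natural transformations $\psi\Rightarrow\omega(x\otimes(-))$. *)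

theory Defs
  imports Main
begin

section \<open>Monoidal categories (not necessarily strict), diagrammatic composition\<close>

record ('o,'m) mcat =
  Ob  :: "'o set"
  Ar  :: "'m set"
  src :: "'m \<Rightarrow> 'o"
  tgt :: "'m \<Rightarrow> 'o"
  idm :: "'o \<Rightarrow> 'm"
  cmp :: "'m \<Rightarrow> 'm \<Rightarrow> 'm"        (* cmp C f g = f ; g  (first f, then g) *)
  tob :: "'o \<Rightarrow> 'o \<Rightarrow> 'o"        (* tensor on objects *)
  tar :: "'m \<Rightarrow> 'm \<Rightarrow> 'm"        (* tensor on morphisms *)
  unt :: "'o"                      (* monoidal unit *)
  asc :: "'o \<Rightarrow> 'o \<Rightarrow> 'o \<Rightarrow> 'm"  (* associator (A*B)*C -> A*(B*C) *)
  lun :: "'o \<Rightarrow> 'm"               (* left unitor  I*A -> A *)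
  run :: "'o \<Rightarrow> 'm"               (* right unitor A*I -> A *)

definition hom :: "('o,'m) mcat \<Rightarrow> 'o \<Rightarrow> 'o \<Rightarrow> 'm set" where
  "hom C A B = {f \<in> Ar C. src C f = A \<and> tgt C f = B}"

definition is_category :: "('o,'m) mcat \<Rightarrow> bool" where
  "is_category C \<longleftrightarrow>
     (\<forall>f\<in>Ar C. src C f \<in> Ob C \<and> tgt C f \<in> Ob C) \<and>
     (\<forall>A\<in>Ob C. idm C A \<in> hom C A A) \<and>
     (\<forall>f\<in>Ar C. \<forall>g\<in>Ar C. tgt C f = src C g \<longrightarrow> cmp C f g \<in> hom C (src C f) (tgt C g)) \<and>
     (\<forall>f\<in>Ar C. cmp C (idm C (src C f)) f = f \<and> cmp C f (idm C (tgt C f)) = f) \<and>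
     (\<forall>f\<in>Ar C. \<forall>g\<in>Ar C. \<forall>h\<in>Ar C. tgt C f = src C g \<and> tgt C g = src C h \<longrightarrow>
        cmp C (cmp C f g) h = cmp C f (cmp C g h))"

definition is_iso :: "('o,'m) mcat \<Rightarrow> 'm \<Rightarrow> bool" where
  "is_iso C f \<longleftrightarrow> f \<in> Ar C \<and> (\<exists>g\<in>hom C (tgt C f) (src C f).
      cmp C f g = idm C (src C f) \<and> cmp C g f = idm C (tgt C f))"

definition is_monoidal_category :: "('o,'m) mcat \<Rightarrow> bool" where
  "is_monoidal_category C \<longleftrightarrow> is_category C \<and>
     unt C \<in> Ob C \<and>
     (\<forall>A\<in>Ob C. \<forall>B\<in>Ob C. tob C A B \<in> Ob C) \<and>
     (\<forall>f\<in>Ar C. \<forall>g\<in>Ar C. tar C f g \<in> hom C (tob C (src C f) (src C g)) (tob C (tgt C f) (tgt C g))) \<and>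
     (\<forall>A\<in>Ob C. \<forall>B\<in>Ob C. tar C (idm C A) (idm C B) = idm C (tob C A B)) \<and>
     (\<forall>f\<in>Ar C. \<forall>f'\<in>Ar C. \<forall>g\<in>Ar C. \<forall>g'\<in>Ar C. tgt C f = src C f' \<and> tgt C g = src C g' \<longrightarrow>
        tar C (cmp C f f') (cmp C g g') = cmp C (tar C f g) (tar C f' g')) \<and>
     (\<forall>A\<in>Ob C. \<forall>B\<in>Ob C. \<forall>D\<in>Ob C.
        asc C A B D \<in> hom C (tob C (tob C A B) D) (tob C A (tob C B D)) \<and> is_iso C (asc C A B D)) \<and>
     (\<forall>A\<in>Ob C. lun C A \<in> hom C (tob C (unt C) A) A \<and> is_iso C (lun C A)) \<and>
     (\<forall>A\<in>Ob C. run C A \<in> hom C (tob C A (unt C)) A \<and> is_iso C (run C A)) \<and>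
     (\<forall>f\<in>Ar C. \<forall>g\<in>Ar C. \<forall>h\<in>Ar C.
        cmp C (tar C (tar C f g) h) (asc C (tgt C f) (tgt C g) (tgt C h)) =
        cmp C (asc C (src C f) (src C g) (src C h)) (tar C f (tar C g h))) \<and>
     (\<forall>f\<in>Ar C. cmp C (tar C (idm C (unt C)) f) (lun C (tgt C f)) = cmp C (lun C (src C f)) f) \<and>
     (\<forall>f\<in>Ar C. cmp C (tar C f (idm C (unt C))) (run C (tgt C f)) = cmp C (run C (src C f)) f) \<and>
     (\<forall>A\<in>Ob C. \<forall>B\<in>Ob C. \<forall>D\<in>Ob C. \<forall>E\<in>Ob C.
        cmp C (cmp C (tar C (asc C A B D) (idm C E)) (asc C A (tob C B D) E))
              (tar C (idm C A) (asc C B D E))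
        = cmp C (asc C (tob C A B) D E) (asc C A B (tob C D E))) \<and>
     (\<forall>A\<in>Ob C. \<forall>B\<in>Ob C.
        cmp C (asc C A (unt C) B) (tar C (idm C A) (lun C B)) = tar C (run C A) (idm C B))"

definition strict_monoidal_functor ::
  "('a,'b) mcat \<Rightarrow> ('c,'d) mcat \<Rightarrow> ('a \<Rightarrow> 'c) \<Rightarrow> ('b \<Rightarrow> 'd) \<Rightarrow> bool" where
  "strict_monoidal_functor D T to tm \<longleftrightarrow>
     (\<forall>A\<in>Ob D. to A \<in> Ob T) \<and>
     (\<forall>f\<in>Ar D. tm f \<in> hom T (to (src D f)) (to (tgt D f))) \<and>
     (\<forall>A\<in>Ob D. tm (idm D A) = idm T (to A)) \<and>
     (\<forall>f\<in>Ar D. \<forall>g\<in>Ar D. tgt D f = src D g \<longrightarrow> tm (cmp D f g) = cmp T (tm f) (tm g)) \<and>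
     to (unt D) = unt T \<and>
     (\<forall>A\<in>Ob D. \<forall>B\<in>Ob D. to (tob D A B) = tob T (to A) (to B)) \<and>
     (\<forall>f\<in>Ar D. \<forall>g\<in>Ar D. tm (tar D f g) = tar T (tm f) (tm g)) \<and>
     (\<forall>A\<in>Ob D. \<forall>B\<in>Ob D. \<forall>E\<in>Ob D. tm (asc D A B E) = asc T (to A) (to B) (to E)) \<and>
     (\<forall>A\<in>Ob D. tm (lun D A) = lun T (to A) \<and> tm (run D A) = run T (to A))"

definition is_left_res :: "('o,'m) mcat \<Rightarrow> 'o \<Rightarrow> 'o \<Rightarrow> 'o \<Rightarrow> 'm \<Rightarrow> bool" where
  "is_left_res C P R X ev \<longleftrightarrow> P \<in> Ob C \<and> R \<in> Ob C \<and> X \<in> Ob C \<and>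
     ev \<in> hom C (tob C P X) R \<and>
     (\<forall>Y\<in>Ob C. \<forall>f\<in>hom C (tob C P Y) R.
        \<exists>!g. g \<in> hom C Y X \<and> f = cmp C (tar C (idm C P) g) ev)"

definition is_right_res :: "('o,'m) mcat \<Rightarrow> 'o \<Rightarrow> 'o \<Rightarrow> 'o \<Rightarrow> 'm \<Rightarrow> bool" where
  "is_right_res C R Q X ev \<longleftrightarrow> R \<in> Ob C \<and> Q \<in> Ob C \<and> X \<in> Ob C \<and>
     ev \<in> hom C (tob C X Q) R \<and>
     (\<forall>Y\<in>Ob C. \<forall>f\<in>hom C (tob C Y Q) R.
        \<exists>!g. g \<in> hom C Y X \<and> f = cmp C (tar C g (idm C Q)) ev)"

definition logical_refinement_system ::
  "('a,'b) mcat \<Rightarrow> ('c,'d) mcat \<Rightarrow> ('a \<Rightarrow> 'c) \<Rightarrow> ('b \<Rightarrow> 'd) \<Rightarrow> bool" where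
  "logical_refinement_system D T to tm \<longleftrightarrow>
     is_monoidal_category D \<and> is_monoidal_category T \<and> strict_monoidal_functor D T to tm \<and>
     (\<forall>P R X ev. is_left_res D P R X ev \<longrightarrow> is_left_res T (to P) (to R) (to X) (tm ev)) \<and>
     (\<forall>R Q X ev. is_right_res D R Q X ev \<longrightarrow> is_right_res T (to R) (to Q) (to X) (tm ev))"

definition refines :: "('a,'b) mcat \<Rightarrow> ('a \<Rightarrow> 'c) \<Rightarrow> 'a \<Rightarrow> 'c \<Rightarrow> bool" where
  "refines D to P A \<longleftrightarrow> P \<in> Ob D \<and> to P = A"

definition derivs :: "('a,'b) mcat \<Rightarrow> ('b \<Rightarrow> 'd) \<Rightarrow> 'a \<Rightarrow> 'd \<Rightarrow> 'a \<Rightarrow> 'b set" where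
  "derivs D tm P c Q = {\<alpha> \<in> hom D P Q. tm \<alpha> = c}"

definition is_pullback ::
  "('a,'b) mcat \<Rightarrow> ('c,'d) mcat \<Rightarrow> ('a \<Rightarrow> 'c) \<Rightarrow> ('b \<Rightarrow> 'd) \<Rightarrow> 'd \<Rightarrow> 'a \<Rightarrow> 'a \<Rightarrow> 'b \<Rightarrow> bool" where
  "is_pullback D T to tm c Q Y lam \<longleftrightarrow>
     c \<in> Ar T \<and> refines D to Q (tgt T c) \<and> refines D to Y (src T c) \<and>
     lam \<in> derivs D tm Y c Q \<and>
     (\<forall>P\<in>Ob D. \<forall>d\<in>hom T (to P) (src T c).
        bij_betw (\<lambda>\<alpha>. cmp D \<alpha> lam) (derivs D tm P d Y) (derivs D tm P (cmp T d c) Q))"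

definition is_monoid :: "('c,'d) mcat \<Rightarrow> 'c \<Rightarrow> 'd \<Rightarrow> 'd \<Rightarrow> bool" where
  "is_monoid T W p e \<longleftrightarrow> W \<in> Ob T \<and> p \<in> hom T (tob T W W) W \<and> e \<in> hom T (unt T) W \<and>
     cmp T (tar T p (idm T W)) p = cmp T (asc T W W W) (cmp T (tar T (idm T W) p) p) \<and>
     cmp T (tar T e (idm T W)) p = lun T W \<and>
     cmp T (tar T (idm T W) e) p = run T W"

text \<open>Left currying: lp : W -> X with p = (id_W * lp) ; ev, for X = P\R with evaluation ev
  (after transport along t). Right currying analogous.\<close>
definition left_curry :: "('c,'d) mcat \<Rightarrow> 'c \<Rightarrow> 'd \<Rightarrow> 'c \<Rightarrow> 'd \<Rightarrow> 'd \<Rightarrow> bool" where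
  "left_curry T W p X ev lp \<longleftrightarrow> lp \<in> hom T W X \<and> p = cmp T (tar T (idm T W) lp) ev"

definition right_curry :: "('c,'d) mcat \<Rightarrow> 'c \<Rightarrow> 'd \<Rightarrow> 'c \<Rightarrow> 'd \<Rightarrow> 'd \<Rightarrow> bool" where
  "right_curry T W p X ev rp \<longleftrightarrow> rp \<in> hom T W X \<and> p = cmp T (tar T rp (idm T W)) ev"

definition enough_res_pb ::
  "('a,'b) mcat \<Rightarrow> ('c,'d) mcat \<Rightarrow> ('a \<Rightarrow> 'c) \<Rightarrow> ('b \<Rightarrow> 'd) \<Rightarrow> 'c \<Rightarrow> 'd \<Rightarrow> bool" where
  "enough_res_pb D T to tm W p \<longleftrightarrow>
     (\<forall>P R. refines D to P W \<and> refines D to R W \<longrightarrow> (\<exists>X ev. is_left_res D P R X ev)) \<and>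
     (\<forall>R Q. refines D to R W \<and> refines D to Q W \<longrightarrow> (\<exists>X ev. is_right_res D R Q X ev)) \<and>
     (\<exists>X ev. is_left_res T W W X ev) \<and>
     (\<exists>X ev. is_right_res T W W X ev) \<and>
     (\<forall>P R X ev lp. refines D to P W \<and> refines D to R W \<and> is_left_res D P R X ev \<and>
         left_curry T W p (to X) (tm ev) lp \<longrightarrow> (\<exists>Y lam. is_pullback D T to tm lp X Y lam)) \<and>
     (\<forall>R Q X ev rp. refines D to R W \<and> refines D to Q W \<and> is_right_res D R Q X ev \<and>
         right_curry T W p (to X) (tm ev) rp \<longrightarrow> (\<exists>Y lam. is_pullback D T to tm rp X Y lam))"

section \<open>Positive representation W^+\<close>

definition wplus_ob :: "('a,'b) mcat \<Rightarrow> ('c,'d) mcat \<Rightarrow> ('a \<Rightarrow> 'c) \<Rightarrow> 'c \<Rightarrow> ('a \<times> 'd) set" where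
  "wplus_ob D T to W = {(P, c). P \<in> Ob D \<and> c \<in> hom T (to P) W}"

definition wplus_hom ::
  "('a,'b) mcat \<Rightarrow> ('c,'d) mcat \<Rightarrow> ('b \<Rightarrow> 'd) \<Rightarrow> ('a \<times> 'd) \<Rightarrow> ('a \<times> 'd) \<Rightarrow> 'b set" where
  "wplus_hom D T tm x y = {\<alpha> \<in> hom D (fst x) (fst y). snd x = cmp T (tm \<alpha>) (snd y)}"

text \<open>Q^+ (P,c) = derivations of P ==>_c Q; action on morphisms by precomposition (cmp D h a).\<close>
definition plus :: "('a,'b) mcat \<Rightarrow> ('b \<Rightarrow> 'd) \<Rightarrow> 'a \<Rightarrow> ('a \<times> 'd) \<Rightarrow> 'b set" where
  "plus D tm Q x = derivs D tm (fst x) (snd x) Q"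

definition wtens :: "('a,'b) mcat \<Rightarrow> ('c,'d) mcat \<Rightarrow> 'd \<Rightarrow> ('a \<times> 'd) \<Rightarrow> ('a \<times> 'd) \<Rightarrow> ('a \<times> 'd)" where
  "wtens D T p x y = (tob D (fst x) (fst y), cmp T (tar T (snd x) (snd y)) p)"

text \<open>(phi -o omega)(y) for phi = P^+, omega = R^+: natural transformations
  P^+ => R^+((-) * y), represented extensionally.\<close>
definition lres_plus ::
  "('a,'b) mcat \<Rightarrow> ('c,'d) mcat \<Rightarrow> ('a \<Rightarrow> 'c) \<Rightarrow> ('b \<Rightarrow> 'd) \<Rightarrow> 'c \<Rightarrow> 'd \<Rightarrow> 'a \<Rightarrow> 'a
   \<Rightarrow> ('a \<times> 'd) \<Rightarrow> (('a \<times> 'd) \<Rightarrow> 'b \<Rightarrow> 'b) set" where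
  "lres_plus D T to tm W p P R y = {\<theta>.
     (\<forall>x\<in>wplus_ob D T to W. \<forall>a\<in>plus D tm P x. \<theta> x a \<in> plus D tm R (wtens D T p x y)) \<and>
     (\<forall>x\<in>wplus_ob D T to W. \<forall>x'\<in>wplus_ob D T to W. \<forall>h\<in>wplus_hom D T tm x' x. \<forall>a\<in>plus D tm P x.
        \<theta> x' (cmp D h a) = cmp D (tar D h (idm D (fst y))) (\<theta> x a)) \<and>
     (\<forall>x a. \<not> (x \<in> wplus_ob D T to W \<and> a \<in> plus D tm P x) \<longrightarrow> \<theta> x a = undefined)}"

text \<open>Action of (P^+ -o R^+) on k : y' -> y.\<close>
definition lres_act ::
  "('a,'b) mcat \<Rightarrow> ('c,'d) mcat \<Rightarrow> ('a \<Rightarrow> 'c) \<Rightarrow> ('b \<Rightarrow> 'd) \<Rightarrow> 'c \<Rightarrow> 'a \<Rightarrow> 'b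
   \<Rightarrow> (('a \<times> 'd) \<Rightarrow> 'b \<Rightarrow> 'b) \<Rightarrow> (('a \<times> 'd) \<Rightarrow> 'b \<Rightarrow> 'b)" where
  "lres_act D T to tm W P k \<theta> = (\<lambda>x a.
     if x \<in> wplus_ob D T to W \<and> a \<in> plus D tm P x
     then cmp D (tar D (idm D (fst x)) k) (\<theta> x a) else undefined)"

text \<open>(omega o- psi)(x) for omega = R^+, psi = Q^+: natural transformations
  Q^+ => R^+(x * (-)), represented extensionally.\<close>
definition rres_plus ::
  "('a,'b) mcat \<Rightarrow> ('c,'d) mcat \<Rightarrow> ('a \<Rightarrow> 'c) \<Rightarrow> ('b \<Rightarrow> 'd) \<Rightarrow> 'c \<Rightarrow> 'd \<Rightarrow> 'a \<Rightarrow> 'a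
   \<Rightarrow> ('a \<times> 'd) \<Rightarrow> (('a \<times> 'd) \<Rightarrow> 'b \<Rightarrow> 'b) set" where
  "rres_plus D T to tm W p R Q x = {\<theta>.
     (\<forall>y\<in>wplus_ob D T to W. \<forall>b\<in>plus D tm Q y. \<theta> y b \<in> plus D tm R (wtens D T p x y)) \<and>
     (\<forall>y\<in>wplus_ob D T to W. \<forall>y'\<in>wplus_ob D T to W. \<forall>k\<in>wplus_hom D T tm y' y. \<forall>b\<in>plus D tm Q y.
        \<theta> y' (cmp D k b) = cmp D (tar D (idm D (fst x)) k) (\<theta> y b)) \<and>
     (\<forall>y b. \<not> (y \<in> wplus_ob D T to W \<and> b \<in> plus D tm Q y) \<longrightarrow> \<theta> y b = undefined)}"

text \<open>Action of (R^+ o- Q^+) on h : x' -> x.\<close>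
definition rres_act ::
  "('a,'b) mcat \<Rightarrow> ('c,'d) mcat \<Rightarrow> ('a \<Rightarrow> 'c) \<Rightarrow> ('b \<Rightarrow> 'd) \<Rightarrow> 'c \<Rightarrow> 'a \<Rightarrow> 'b
   \<Rightarrow> (('a \<times> 'd) \<Rightarrow> 'b \<Rightarrow> 'b) \<Rightarrow> (('a \<times> 'd) \<Rightarrow> 'b \<Rightarrow> 'b)" where
  "rres_act D T to tm W Q h \<theta> = (\<lambda>y b.
     if y \<in> wplus_ob D T to W \<and> b \<in> plus D tm Q y
     then cmp D (tar D h (idm D (fst y))) (\<theta> y b) else undefined)"

definition nat_iso_lres ::
  "('a,'b) mcat \<Rightarrow> ('c,'d) mcat \<Rightarrow> ('a \<Rightarrow> 'c) \<Rightarrow> ('b \<Rightarrow> 'd) \<Rightarrow> 'c \<Rightarrow> 'd \<Rightarrow> 'a \<Rightarrow> 'a \<Rightarrow> 'a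
   \<Rightarrow> (('a \<times> 'd) \<Rightarrow> 'b \<Rightarrow> (('a \<times> 'd) \<Rightarrow> 'b \<Rightarrow> 'b)) \<Rightarrow> bool" where
  "nat_iso_lres D T to tm W p Y P R \<Phi> \<longleftrightarrow>
     (\<forall>y\<in>wplus_ob D T to W. bij_betw (\<Phi> y) (plus D tm Y y) (lres_plus D T to tm W p P R y)) \<and>
     (\<forall>y\<in>wplus_ob D T to W. \<forall>y'\<in>wplus_ob D T to W. \<forall>k\<in>wplus_hom D T tm y' y. \<forall>b\<in>plus D tm Y y.
        \<Phi> y' (cmp D k b) = lres_act D T to tm W P k (\<Phi> y b))"

definition nat_iso_rres ::
  "('a,'b) mcat \<Rightarrow> ('c,'d) mcat \<Rightarrow> ('a \<Rightarrow> 'c) \<Rightarrow> ('b \<Rightarrow> 'd) \<Rightarrow> 'c \<Rightarrow> 'd \<Rightarrow> 'a \<Rightarrow> 'a \<Rightarrow> 'a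
   \<Rightarrow> (('a \<times> 'd) \<Rightarrow> 'b \<Rightarrow> (('a \<times> 'd) \<Rightarrow> 'b \<Rightarrow> 'b)) \<Rightarrow> bool" where
  "nat_iso_rres D T to tm W p Y R Q \<Psi> \<longleftrightarrow>
     (\<forall>x\<in>wplus_ob D T to W. bij_betw (\<Psi> x) (plus D tm Y x) (rres_plus D T to tm W p R Q x)) \<and>
     (\<forall>x\<in>wplus_ob D T to W. \<forall>x'\<in>wplus_ob D T to W. \<forall>h\<in>wplus_hom D T tm x' x. \<forall>b\<in>plus D tm Y x.
        \<Psi> x' (cmp D h b) = rres_act D T to tm W Q h (\<Psi> x b))"

end

theory Submission
  imports Defs
begin


lemma hom_cmp: "is_category C \<Longrightarrow> f \<in> hom C A B \<Longrightarrow> g \<in> hom C B E \<Longrightarrow> cmp C f g \<in> hom C A E"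
  unfolding is_category_def hom_def by auto
lemma hom_id: "is_category C \<Longrightarrow> A \<in> Ob C \<Longrightarrow> idm C A \<in> hom C A A"
  unfolding is_category_def by auto
lemma hom_obs: "is_category C \<Longrightarrow> f \<in> hom C A B \<Longrightarrow> A \<in> Ob C \<and> B \<in> Ob C"
  unfolding is_category_def hom_def by auto
lemma id_l: "is_category C \<Longrightarrow> f \<in> hom C A B \<Longrightarrow> cmp C (idm C A) f = f"
  unfolding is_category_def hom_def by auto
lemma id_r: "is_category C \<Longrightarrow> f \<in> hom C A B \<Longrightarrow> cmp C f (idm C B) = f"
  unfolding is_category_def hom_def by auto
lemma assoc: "is_category C \<Longrightarrow> f \<in> hom C A B \<Longrightarrow> g \<in> hom C B E \<Longrightarrow> h \<in> hom C E F \<Longrightarrow>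
   cmp C (cmp C f g) h = cmp C f (cmp C g h)"
  unfolding is_category_def hom_def by auto
lemma mon_cat: "is_monoidal_category C \<Longrightarrow> is_category C"
  unfolding is_monoidal_category_def by auto
lemma tar_hom: "is_monoidal_category C \<Longrightarrow> f \<in> hom C A B \<Longrightarrow> g \<in> hom C A' B' \<Longrightarrow>
   tar C f g \<in> hom C (tob C A A') (tob C B B')"
  unfolding is_monoidal_category_def hom_def by auto
lemma tob_ob: "is_monoidal_category C \<Longrightarrow> A \<in> Ob C \<Longrightarrow> B \<in> Ob C \<Longrightarrow> tob C A B \<in> Ob C"
  unfolding is_monoidal_category_def by auto
lemma interch: "is_monoidal_category C \<Longrightarrow> f \<in> hom C A B \<Longrightarrow> f' \<in> hom C B E \<Longrightarrow>
   g \<in> hom C A' B' \<Longrightarrow> g' \<in> hom C B' E' \<Longrightarrow>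
   tar C (cmp C f f') (cmp C g g') = cmp C (tar C f g) (tar C f' g')"
  unfolding is_monoidal_category_def hom_def by auto

lemma fun_hom: "strict_monoidal_functor D T to tm \<Longrightarrow> f \<in> hom D A B \<Longrightarrow> tm f \<in> hom T (to A) (to B)"
  unfolding strict_monoidal_functor_def hom_def by auto
lemma fun_ob: "strict_monoidal_functor D T to tm \<Longrightarrow> A \<in> Ob D \<Longrightarrow> to A \<in> Ob T"
  unfolding strict_monoidal_functor_def by auto
lemma fun_id: "strict_monoidal_functor D T to tm \<Longrightarrow> A \<in> Ob D \<Longrightarrow> tm (idm D A) = idm T (to A)"
  unfolding strict_monoidal_functor_def by auto
lemma fun_cmp: "strict_monoidal_functor D T to tm \<Longrightarrow> f \<in> hom D A B \<Longrightarrow> g \<in> hom D B E \<Longrightarrow>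
   tm (cmp D f g) = cmp T (tm f) (tm g)"
  unfolding strict_monoidal_functor_def hom_def by auto
lemma fun_tar: "strict_monoidal_functor D T to tm \<Longrightarrow> f \<in> hom D A B \<Longrightarrow> g \<in> hom D A' B' \<Longrightarrow>
   tm (tar D f g) = tar T (tm f) (tm g)"
  unfolding strict_monoidal_functor_def hom_def by auto
lemma fun_tob: "strict_monoidal_functor D T to tm \<Longrightarrow> A \<in> Ob D \<Longrightarrow> B \<in> Ob D \<Longrightarrow>
   to (tob D A B) = tob T (to A) (to B)"
  unfolding strict_monoidal_functor_def by auto

lemma lres_ex: "is_left_res C P R X ev \<Longrightarrow> Y \<in> Ob C \<Longrightarrow> f \<in> hom C (tob C P Y) R \<Longrightarrow>
   \<exists>g. g \<in> hom C Y X \<and> f = cmp C (tar C (idm C P) g) ev"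
  unfolding is_left_res_def by metis
lemma lres_uniq: "is_left_res C P R X ev \<Longrightarrow> Y \<in> Ob C \<Longrightarrow> g \<in> hom C Y X \<Longrightarrow> g' \<in> hom C Y X \<Longrightarrow>
   cmp C (tar C (idm C P) g) ev \<in> hom C (tob C P Y) R \<Longrightarrow>
   cmp C (tar C (idm C P) g) ev = cmp C (tar C (idm C P) g') ev \<Longrightarrow> g = g'"
  unfolding is_left_res_def by metis
lemma rres_ex: "is_right_res C R Q X ev \<Longrightarrow> Y \<in> Ob C \<Longrightarrow> f \<in> hom C (tob C Y Q) R \<Longrightarrow>
   \<exists>g. g \<in> hom C Y X \<and> f = cmp C (tar C g (idm C Q)) ev"
  unfolding is_right_res_def by metis
lemma rres_uniq: "is_right_res C R Q X ev \<Longrightarrow> Y \<in> Ob C \<Longrightarrow> g \<in> hom C Y X \<Longrightarrow> g' \<in> hom C Y X \<Longrightarrow>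
   cmp C (tar C g (idm C Q)) ev \<in> hom C (tob C Y Q) R \<Longrightarrow>
   cmp C (tar C g (idm C Q)) ev = cmp C (tar C g' (idm C Q)) ev \<Longrightarrow> g = g'"
  unfolding is_right_res_def by metis


lemma left_part:
  assumes LRS: "logical_refinement_system D T to tm"
    and Pr: "refines D to P W" and Rr: "refines D to R W" and res: "is_left_res D P R X ev"
    and lc: "left_curry T W p (to X) (tm ev) lp" and pb: "is_pullback D T to tm lp X Y lam"
  shows "\<exists>\<Phi>. nat_iso_lres D T to tm W p Y P R \<Phi>"
proof -
  have MD: "is_monoidal_category D" and MT: "is_monoidal_category T"
    and F: "strict_monoidal_functor D T to tm"
    and resT_all: "\<And>P R X ev. is_left_res D P R X ev \<Longrightarrow> is_left_res T (to P) (to R) (to X) (tm ev)"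
    using LRS unfolding logical_refinement_system_def by auto
  have CD: "is_category D" and CT: "is_category T" using MD MT mon_cat by auto
  have P: "P \<in> Ob D" "to P = W" and R: "R \<in> Ob D" "to R = W" using Pr Rr unfolding refines_def by auto
  have resT: "is_left_res T W W (to X) (tm ev)" using resT_all[OF res] P R by simp
  have X: "X \<in> Ob D" and ev: "ev \<in> hom D (tob D P X) R" using res unfolding is_left_res_def by auto
  have W: "W \<in> Ob T" using fun_ob[OF F P(1)] P by simp
  have lp: "lp \<in> hom T W (to X)" and pdef: "p = cmp T (tar T (idm T W) lp) (tm ev)"
    using lc unfolding left_curry_def by auto
  have lpAr: "src T lp = W" "tgt T lp = to X" using lp unfolding hom_def by auto
  have Y: "Y \<in> Ob D" "to Y = W" and lam: "lam \<in> hom D Y X" "tm lam = lp"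
    and pbb: "\<And>A d. A \<in> Ob D \<Longrightarrow> d \<in> hom T (to A) W \<Longrightarrow>
        bij_betw (\<lambda>\<alpha>. cmp D \<alpha> lam) (derivs D tm A d Y) (derivs D tm A (cmp T d lp) X)"
    using pb lpAr unfolding is_pullback_def refines_def derivs_def by auto
  have tmev: "tm ev \<in> hom T (tob T W (to X)) W"
    using fun_hom[OF F ev] fun_tob[OF F P(1) X] P R by simp
  have idW: "idm T W \<in> hom T W W" using hom_id[OF CT W] .
  have idP: "idm D P \<in> hom D P P" using hom_id[OF CD P(1)] .
  have key_tm: "cmp T (tar T d (cmp T c lp)) (tm ev) = cmp T (tar T d c) p"
    if d: "d \<in> hom T B W" and c: "c \<in> hom T A W" for d c A B
  proof -
    have "tar T d (cmp T c lp) = tar T (cmp T d (idm T W)) (cmp T c lp)" using id_r[OF CT d] by simp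
    also have "\<dots> = cmp T (tar T d c) (tar T (idm T W) lp)" using interch[OF MT d idW c lp] .
    finally show ?thesis
      using assoc[OF CT tar_hom[OF MT d c] tar_hom[OF MT idW lp] tmev] pdef by simp
  qed
  define \<Phi> where "\<Phi> = (\<lambda>(y::'a \<times> 'd) b. \<lambda>x a. if x \<in> wplus_ob D T to W \<and> a \<in> plus D tm P x
      then cmp D (tar D a (cmp D b lam)) ev else undefined)"
  define x0 where "x0 = (P, idm T W)"
  have x0: "x0 \<in> wplus_ob D T to W" unfolding x0_def wplus_ob_def using P idW by auto
  have a0: "idm D P \<in> plus D tm P x0" unfolding x0_def plus_def derivs_def
    using idP fun_id[OF F P(1)] P by auto
  have part1: "bij_betw (\<Phi> y) (plus D tm Y y) (lres_plus D T to tm W p P R y)"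
    if y: "y \<in> wplus_ob D T to W" for y
  proof -
    obtain A c where yAc: "y = (A, c)" and A: "A \<in> Ob D" and c: "c \<in> hom T (to A) W"
      using y unfolding wplus_ob_def by auto
    have plusY: "plus D tm Y y = derivs D tm A c Y" using yAc unfolding plus_def by simp
    note bj = pbb[OF A c]
    have mem: "\<Phi> y b \<in> lres_plus D T to tm W p P R y" if b: "b \<in> plus D tm Y y" for b
    proof -
      have bh: "b \<in> hom D A Y" "tm b = c" using b plusY unfolding derivs_def by auto
      have bl: "cmp D b lam \<in> hom D A X" using hom_cmp[OF CD bh(1) lam(1)] .
      have tbl: "tm (cmp D b lam) = cmp T c lp" using fun_cmp[OF F bh(1) lam(1)] bh lam by simp
      show ?thesis unfolding lres_plus_def
      proof (intro CollectI conjI ballI allI impI)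
        fix x a assume x: "x \<in> wplus_ob D T to W" and a: "a \<in> plus D tm P x"
        obtain B d where xBd: "x = (B, d)" and B: "B \<in> Ob D" and d: "d \<in> hom T (to B) W"
          using x unfolding wplus_ob_def by auto
        have ah: "a \<in> hom D B P" "tm a = d" using a xBd unfolding plus_def derivs_def by auto
        have h1: "cmp D (tar D a (cmp D b lam)) ev \<in> hom D (tob D B A) R"
          using hom_cmp[OF CD tar_hom[OF MD ah(1) bl] ev] .
        have "tm (cmp D (tar D a (cmp D b lam)) ev) = cmp T (tar T d (cmp T c lp)) (tm ev)"
          using fun_cmp[OF F tar_hom[OF MD ah(1) bl] ev] fun_tar[OF F ah(1) bl] ah tbl by simp
        also have "\<dots> = cmp T (tar T d c) p" using key_tm[OF d c] .
        finally show "\<Phi> y b x a \<in> plus D tm R (wtens D T p x y)"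
          using h1 x a unfolding \<Phi>_def plus_def derivs_def wtens_def xBd yAc by simp
      next
        fix x x' h a assume x: "x \<in> wplus_ob D T to W" and x': "x' \<in> wplus_ob D T to W"
          and h: "h \<in> wplus_hom D T tm x' x" and a: "a \<in> plus D tm P x"
        obtain B d where xBd: "x = (B, d)" and B: "B \<in> Ob D" and d: "d \<in> hom T (to B) W"
          using x unfolding wplus_ob_def by auto
        obtain B' d' where xBd': "x' = (B', d')" and B': "B' \<in> Ob D" and d': "d' \<in> hom T (to B') W"
          using x' unfolding wplus_ob_def by auto
        have ah: "a \<in> hom D B P" "tm a = d" using a xBd unfolding plus_def derivs_def by auto
        have hh: "h \<in> hom D B' B" "d' = cmp T (tm h) d" using h xBd xBd' unfolding wplus_hom_def by auto
        have ha: "cmp D h a \<in> plus D tm P x'"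
          using hom_cmp[OF CD hh(1) ah(1)] fun_cmp[OF F hh(1) ah(1)] ah hh xBd'
          unfolding plus_def derivs_def by auto
        have idA: "idm D A \<in> hom D A A" using hom_id[OF CD A] .
        have "tar D (cmp D h a) (cmp D b lam) = tar D (cmp D h a) (cmp D (idm D A) (cmp D b lam))"
          using id_l[OF CD bl] by simp
        also have "\<dots> = cmp D (tar D h (idm D A)) (tar D a (cmp D b lam))"
          using interch[OF MD hh(1) ah(1) idA bl] .
        finally have e: "tar D (cmp D h a) (cmp D b lam) = cmp D (tar D h (idm D A)) (tar D a (cmp D b lam))" .
        show "\<Phi> y b x' (cmp D h a) = cmp D (tar D h (idm D (fst y))) (\<Phi> y b x a)"
          unfolding \<Phi>_def using x x' a ha e yAc
            assoc[OF CD tar_hom[OF MD hh(1) idA] tar_hom[OF MD ah(1) bl] ev] by simp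
      next
        fix x a assume "\<not> (x \<in> wplus_ob D T to W \<and> a \<in> plus D tm P x)"
        then show "\<Phi> y b x a = undefined" unfolding \<Phi>_def by auto
      qed
    qed
    have inj: "inj_on (\<Phi> y) (plus D tm Y y)"
    proof (rule inj_onI)
      fix b b' assume b: "b \<in> plus D tm Y y" and b': "b' \<in> plus D tm Y y" and eq: "\<Phi> y b = \<Phi> y b'"
      have bh: "b \<in> hom D A Y" and bh': "b' \<in> hom D A Y" using b b' plusY unfolding derivs_def by auto
      have bl: "cmp D b lam \<in> hom D A X" using hom_cmp[OF CD bh lam(1)] .
      have bl': "cmp D b' lam \<in> hom D A X" using hom_cmp[OF CD bh' lam(1)] .
      have "\<Phi> y b x0 (idm D P) = \<Phi> y b' x0 (idm D P)" using eq by simp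
      hence e: "cmp D (tar D (idm D P) (cmp D b lam)) ev = cmp D (tar D (idm D P) (cmp D b' lam)) ev"
        unfolding \<Phi>_def using x0 a0 by simp
      have "cmp D b lam = cmp D b' lam"
        using lres_uniq[OF res A bl bl' hom_cmp[OF CD tar_hom[OF MD idP bl] ev] e] .
      thus "b = b'" using bj b b' plusY unfolding bij_betw_def inj_on_def by auto
    qed
    have surj: "lres_plus D T to tm W p P R y \<subseteq> \<Phi> y ` plus D tm Y y"
    proof
      fix \<theta> assume th: "\<theta> \<in> lres_plus D T to tm W p P R y"
      have th1: "\<And>x a. x \<in> wplus_ob D T to W \<Longrightarrow> a \<in> plus D tm P x \<Longrightarrow> \<theta> x a \<in> plus D tm R (wtens D T p x y)"
        and th2: "\<And>x x' h a. x \<in> wplus_ob D T to W \<Longrightarrow> x' \<in> wplus_ob D T to W \<Longrightarrow> h \<in> wplus_hom D T tm x' x \<Longrightarrow>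
            a \<in> plus D tm P x \<Longrightarrow> \<theta> x' (cmp D h a) = cmp D (tar D h (idm D (fst y))) (\<theta> x a)"
        and th3: "\<And>x a. \<not> (x \<in> wplus_ob D T to W \<and> a \<in> plus D tm P x) \<Longrightarrow> \<theta> x a = undefined"
        using th unfolding lres_plus_def by auto
      define f0 where "f0 = \<theta> x0 (idm D P)"
      have f0: "f0 \<in> hom D (tob D P A) R" "tm f0 = cmp T (tar T (idm T W) c) p"
        using th1[OF x0 a0] unfolding f0_def plus_def derivs_def wtens_def x0_def yAc by auto
      obtain g where g: "g \<in> hom D A X" and fg: "f0 = cmp D (tar D (idm D P) g) ev"
        using lres_ex[OF res A f0(1)] by blast
      have tg: "tm g \<in> hom T (to A) (to X)" using fun_hom[OF F g] .
      have clp: "cmp T c lp \<in> hom T (to A) (to X)" using hom_cmp[OF CT c lp] .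
      have toA: "to A \<in> Ob T" using fun_ob[OF F A] .
      have t1: "tm f0 = cmp T (tar T (idm T W) (tm g)) (tm ev)"
        using fg fun_cmp[OF F tar_hom[OF MD idP g] ev] fun_tar[OF F idP g] fun_id[OF F P(1)] P by simp
      have t2: "tm f0 = cmp T (tar T (idm T W) (cmp T c lp)) (tm ev)"
        using f0(2) key_tm[OF idW c] by simp
      have tgc: "tm g = cmp T c lp"
        using lres_uniq[OF resT toA tg clp, of] t1 t2
          hom_cmp[OF CT tar_hom[OF MT idW tg] tmev] by metis
      have gd: "g \<in> derivs D tm A (cmp T c lp) X" using g tgc unfolding derivs_def by auto
      then obtain b where b: "b \<in> derivs D tm A c Y" and bg: "cmp D b lam = g"
        using bj unfolding bij_betw_def by (metis imageE)
      have bY: "b \<in> plus D tm Y y" using b plusY by simp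
      have "\<theta> = \<Phi> y b"
      proof (intro ext)
        fix x a
        show "\<theta> x a = \<Phi> y b x a"
        proof (cases "x \<in> wplus_ob D T to W \<and> a \<in> plus D tm P x")
          case True
          then have x: "x \<in> wplus_ob D T to W" and a: "a \<in> plus D tm P x" by auto
          obtain B d where xBd: "x = (B, d)" and B: "B \<in> Ob D" and d: "d \<in> hom T (to B) W"
            using x unfolding wplus_ob_def by auto
          have ah: "a \<in> hom D B P" "tm a = d" using a xBd unfolding plus_def derivs_def by auto
          have tah: "tm a \<in> hom T (to B) W" using fun_hom[OF F ah(1)] P by simp
          have ahom: "a \<in> wplus_hom D T tm x x0"
            unfolding wplus_hom_def x0_def xBd using ah id_r[OF CT tah] by simp
          have idA: "idm D A \<in> hom D A A" using hom_id[OF CD A] .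
          have "\<theta> x a = \<theta> x (cmp D a (idm D P))" using id_r[OF CD ah(1)] by simp
          also have "\<dots> = cmp D (tar D a (idm D A)) f0"
            using th2[OF x0 x ahom a0] yAc unfolding f0_def by simp
          also have "\<dots> = cmp D (cmp D (tar D a (idm D A)) (tar D (idm D P) g)) ev"
            using fg assoc[OF CD tar_hom[OF MD ah(1) idA] tar_hom[OF MD idP g] ev] by simp
          also have "\<dots> = cmp D (tar D (cmp D a (idm D P)) (cmp D (idm D A) g)) ev"
            using interch[OF MD ah(1) idP idA g] by simp
          also have "\<dots> = cmp D (tar D a g) ev" using id_r[OF CD ah(1)] id_l[OF CD g] by simp
          finally show ?thesis unfolding \<Phi>_def using True bg by simp
        next
          case False
          then show ?thesis using th3 unfolding \<Phi>_def by auto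
        qed
      qed
      thus "\<theta> \<in> \<Phi> y ` plus D tm Y y" using bY by blast
    qed
    show ?thesis unfolding bij_betw_def using inj mem surj by blast
  qed
  have part2: "\<Phi> y' (cmp D k b) = lres_act D T to tm W P k (\<Phi> y b)"
    if y: "y \<in> wplus_ob D T to W" and y': "y' \<in> wplus_ob D T to W"
      and k: "k \<in> wplus_hom D T tm y' y" and b: "b \<in> plus D tm Y y" for y y' k b
  proof -
    obtain A c where yAc: "y = (A, c)" and A: "A \<in> Ob D"
      using y unfolding wplus_ob_def by auto
    obtain A' c' where yAc': "y' = (A', c')"
      using y' unfolding wplus_ob_def by auto
    have kh: "k \<in> hom D A' A" using k yAc yAc' unfolding wplus_hom_def by auto
    have bh: "b \<in> hom D A Y" using b yAc unfolding plus_def derivs_def by auto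
    have bl: "cmp D b lam \<in> hom D A X" using hom_cmp[OF CD bh lam(1)] .
    show ?thesis
    proof (intro ext)
      fix x a
      show "\<Phi> y' (cmp D k b) x a = lres_act D T to tm W P k (\<Phi> y b) x a"
      proof (cases "x \<in> wplus_ob D T to W \<and> a \<in> plus D tm P x")
        case True
        then obtain B d where xBd: "x = (B, d)" and B: "B \<in> Ob D"
          unfolding wplus_ob_def by auto
        have ah: "a \<in> hom D B P" using True xBd unfolding plus_def derivs_def by auto
        have idB: "idm D B \<in> hom D B B" using hom_id[OF CD B] .
        have "cmp D (tar D (idm D B) k) (cmp D (tar D a (cmp D b lam)) ev)
            = cmp D (cmp D (tar D (idm D B) k) (tar D a (cmp D b lam))) ev"
          using assoc[OF CD tar_hom[OF MD idB kh] tar_hom[OF MD ah bl] ev] by simp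
        also have "\<dots> = cmp D (tar D (cmp D (idm D B) a) (cmp D k (cmp D b lam))) ev"
          using interch[OF MD idB ah kh bl] by simp
        also have "\<dots> = cmp D (tar D a (cmp D (cmp D k b) lam)) ev"
          using id_l[OF CD ah] assoc[OF CD kh bh lam(1)] by simp
        finally show ?thesis unfolding \<Phi>_def lres_act_def using True xBd by simp
      next
        case False
        then show ?thesis unfolding \<Phi>_def lres_act_def by auto
      qed
    qed
  qed
  show ?thesis unfolding nat_iso_lres_def using part1 part2 by blast
qed


lemma right_part:
  assumes LRS: "logical_refinement_system D T to tm"
    and Rr: "refines D to R W" and Qr: "refines D to Q W" and res: "is_right_res D R Q X ev"
    and rc: "right_curry T W p (to X) (tm ev) rp" and pb: "is_pullback D T to tm rp X Y lam"
  shows "\<exists>\<Psi>. nat_iso_rres D T to tm W p Y R Q \<Psi>"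
proof -
  have MD: "is_monoidal_category D" and MT: "is_monoidal_category T"
    and F: "strict_monoidal_functor D T to tm"
    and resT_all: "\<And>R Q X ev. is_right_res D R Q X ev \<Longrightarrow> is_right_res T (to R) (to Q) (to X) (tm ev)"
    using LRS unfolding logical_refinement_system_def by auto
  have CD: "is_category D" and CT: "is_category T" using MD MT mon_cat by auto
  have Q: "Q \<in> Ob D" "to Q = W" and R: "R \<in> Ob D" "to R = W" using Qr Rr unfolding refines_def by auto
  have resT: "is_right_res T W W (to X) (tm ev)" using resT_all[OF res] Q R by simp
  have X: "X \<in> Ob D" and ev: "ev \<in> hom D (tob D X Q) R" using res unfolding is_right_res_def by auto
  have W: "W \<in> Ob T" using fun_ob[OF F Q(1)] Q by simp
  have rp: "rp \<in> hom T W (to X)" and pdef: "p = cmp T (tar T rp (idm T W)) (tm ev)"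
    using rc unfolding right_curry_def by auto
  have rpAr: "src T rp = W" "tgt T rp = to X" using rp unfolding hom_def by auto
  have Y: "Y \<in> Ob D" "to Y = W" and lam: "lam \<in> hom D Y X" "tm lam = rp"
    and pbb: "\<And>A d. A \<in> Ob D \<Longrightarrow> d \<in> hom T (to A) W \<Longrightarrow>
        bij_betw (\<lambda>\<alpha>. cmp D \<alpha> lam) (derivs D tm A d Y) (derivs D tm A (cmp T d rp) X)"
    using pb rpAr unfolding is_pullback_def refines_def derivs_def by auto
  have tmev: "tm ev \<in> hom T (tob T (to X) W) W"
    using fun_hom[OF F ev] fun_tob[OF F X Q(1)] Q R by simp
  have idW: "idm T W \<in> hom T W W" using hom_id[OF CT W] .
  have idQ: "idm D Q \<in> hom D Q Q" using hom_id[OF CD Q(1)] .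
  have key_tm: "cmp T (tar T (cmp T c rp) d) (tm ev) = cmp T (tar T c d) p"
    if d: "d \<in> hom T B W" and c: "c \<in> hom T A W" for d c A B
  proof -
    have "tar T (cmp T c rp) d = tar T (cmp T c rp) (cmp T d (idm T W))" using id_r[OF CT d] by simp
    also have "\<dots> = cmp T (tar T c d) (tar T rp (idm T W))" using interch[OF MT c rp d idW] .
    finally show ?thesis
      using assoc[OF CT tar_hom[OF MT c d] tar_hom[OF MT rp idW] tmev] pdef by simp
  qed
  define \<Psi> where "\<Psi> = (\<lambda>(x::'a \<times> 'd) b. \<lambda>y a. if y \<in> wplus_ob D T to W \<and> a \<in> plus D tm Q y
      then cmp D (tar D (cmp D b lam) a) ev else undefined)"
  define y0 where "y0 = (Q, idm T W)"
  have y0: "y0 \<in> wplus_ob D T to W" unfolding y0_def wplus_ob_def using Q idW by auto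
  have a0: "idm D Q \<in> plus D tm Q y0" unfolding y0_def plus_def derivs_def
    using idQ fun_id[OF F Q(1)] Q by auto
  have part1: "bij_betw (\<Psi> x) (plus D tm Y x) (rres_plus D T to tm W p R Q x)"
    if x: "x \<in> wplus_ob D T to W" for x
  proof -
    obtain A c where xAc: "x = (A, c)" and A: "A \<in> Ob D" and c: "c \<in> hom T (to A) W"
      using x unfolding wplus_ob_def by auto
    have plusY: "plus D tm Y x = derivs D tm A c Y" using xAc unfolding plus_def by simp
    note bj = pbb[OF A c]
    have mem: "\<Psi> x b \<in> rres_plus D T to tm W p R Q x" if b: "b \<in> plus D tm Y x" for b
    proof -
      have bh: "b \<in> hom D A Y" "tm b = c" using b plusY unfolding derivs_def by auto
      have bl: "cmp D b lam \<in> hom D A X" using hom_cmp[OF CD bh(1) lam(1)] .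
      have tbl: "tm (cmp D b lam) = cmp T c rp" using fun_cmp[OF F bh(1) lam(1)] bh lam by simp
      show ?thesis unfolding rres_plus_def
      proof (intro CollectI conjI ballI allI impI)
        fix y a assume y: "y \<in> wplus_ob D T to W" and a: "a \<in> plus D tm Q y"
        obtain B d where yBd: "y = (B, d)" and B: "B \<in> Ob D" and d: "d \<in> hom T (to B) W"
          using y unfolding wplus_ob_def by auto
        have ah: "a \<in> hom D B Q" "tm a = d" using a yBd unfolding plus_def derivs_def by auto
        have h1: "cmp D (tar D (cmp D b lam) a) ev \<in> hom D (tob D A B) R"
          using hom_cmp[OF CD tar_hom[OF MD bl ah(1)] ev] .
        have "tm (cmp D (tar D (cmp D b lam) a) ev) = cmp T (tar T (cmp T c rp) d) (tm ev)"
          using fun_cmp[OF F tar_hom[OF MD bl ah(1)] ev] fun_tar[OF F bl ah(1)] ah tbl by simp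
        also have "\<dots> = cmp T (tar T c d) p" using key_tm[OF d c] .
        finally show "\<Psi> x b y a \<in> plus D tm R (wtens D T p x y)"
          using h1 y a unfolding \<Psi>_def plus_def derivs_def wtens_def yBd xAc by simp
      next
        fix y y' k a assume y: "y \<in> wplus_ob D T to W" and y': "y' \<in> wplus_ob D T to W"
          and k: "k \<in> wplus_hom D T tm y' y" and a: "a \<in> plus D tm Q y"
        obtain B d where yBd: "y = (B, d)" and B: "B \<in> Ob D" and d: "d \<in> hom T (to B) W"
          using y unfolding wplus_ob_def by auto
        obtain B' d' where yBd': "y' = (B', d')" and B': "B' \<in> Ob D" and d': "d' \<in> hom T (to B') W"
          using y' unfolding wplus_ob_def by auto
        have ah: "a \<in> hom D B Q" "tm a = d" using a yBd unfolding plus_def derivs_def by auto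
        have kh: "k \<in> hom D B' B" "d' = cmp T (tm k) d" using k yBd yBd' unfolding wplus_hom_def by auto
        have ka: "cmp D k a \<in> plus D tm Q y'"
          using hom_cmp[OF CD kh(1) ah(1)] fun_cmp[OF F kh(1) ah(1)] ah kh yBd'
          unfolding plus_def derivs_def by auto
        have idA: "idm D A \<in> hom D A A" using hom_id[OF CD A] .
        have "tar D (cmp D b lam) (cmp D k a) = tar D (cmp D (idm D A) (cmp D b lam)) (cmp D k a)"
          using id_l[OF CD bl] by simp
        also have "\<dots> = cmp D (tar D (idm D A) k) (tar D (cmp D b lam) a)"
          using interch[OF MD idA bl kh(1) ah(1)] .
        finally have e: "tar D (cmp D b lam) (cmp D k a) = cmp D (tar D (idm D A) k) (tar D (cmp D b lam) a)" .
        show "\<Psi> x b y' (cmp D k a) = cmp D (tar D (idm D (fst x)) k) (\<Psi> x b y a)"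
          unfolding \<Psi>_def using y y' a ka e xAc
            assoc[OF CD tar_hom[OF MD idA kh(1)] tar_hom[OF MD bl ah(1)] ev] by simp
      next
        fix y a assume "\<not> (y \<in> wplus_ob D T to W \<and> a \<in> plus D tm Q y)"
        then show "\<Psi> x b y a = undefined" unfolding \<Psi>_def by auto
      qed
    qed
    have inj: "inj_on (\<Psi> x) (plus D tm Y x)"
    proof (rule inj_onI)
      fix b b' assume b: "b \<in> plus D tm Y x" and b': "b' \<in> plus D tm Y x" and eq: "\<Psi> x b = \<Psi> x b'"
      have bh: "b \<in> hom D A Y" and bh': "b' \<in> hom D A Y" using b b' plusY unfolding derivs_def by auto
      have bl: "cmp D b lam \<in> hom D A X" using hom_cmp[OF CD bh lam(1)] .
      have bl': "cmp D b' lam \<in> hom D A X" using hom_cmp[OF CD bh' lam(1)] .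
      have "\<Psi> x b y0 (idm D Q) = \<Psi> x b' y0 (idm D Q)" using eq by simp
      hence e: "cmp D (tar D (cmp D b lam) (idm D Q)) ev = cmp D (tar D (cmp D b' lam) (idm D Q)) ev"
        unfolding \<Psi>_def using y0 a0 by simp
      have "cmp D b lam = cmp D b' lam"
        using rres_uniq[OF res A bl bl' hom_cmp[OF CD tar_hom[OF MD bl idQ] ev] e] .
      thus "b = b'" using bj b b' plusY unfolding bij_betw_def inj_on_def by auto
    qed
    have surj: "rres_plus D T to tm W p R Q x \<subseteq> \<Psi> x ` plus D tm Y x"
    proof
      fix \<theta> assume th: "\<theta> \<in> rres_plus D T to tm W p R Q x"
      have th1: "\<And>y a. y \<in> wplus_ob D T to W \<Longrightarrow> a \<in> plus D tm Q y \<Longrightarrow> \<theta> y a \<in> plus D tm R (wtens D T p x y)"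
        and th2: "\<And>y y' k a. y \<in> wplus_ob D T to W \<Longrightarrow> y' \<in> wplus_ob D T to W \<Longrightarrow> k \<in> wplus_hom D T tm y' y \<Longrightarrow>
            a \<in> plus D tm Q y \<Longrightarrow> \<theta> y' (cmp D k a) = cmp D (tar D (idm D (fst x)) k) (\<theta> y a)"
        and th3: "\<And>y a. \<not> (y \<in> wplus_ob D T to W \<and> a \<in> plus D tm Q y) \<Longrightarrow> \<theta> y a = undefined"
        using th unfolding rres_plus_def by auto
      define f0 where "f0 = \<theta> y0 (idm D Q)"
      have f0: "f0 \<in> hom D (tob D A Q) R" "tm f0 = cmp T (tar T c (idm T W)) p"
        using th1[OF y0 a0] unfolding f0_def plus_def derivs_def wtens_def y0_def xAc by auto
      obtain g where g: "g \<in> hom D A X" and fg: "f0 = cmp D (tar D g (idm D Q)) ev"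
        using rres_ex[OF res A f0(1)] by blast
      have tg: "tm g \<in> hom T (to A) (to X)" using fun_hom[OF F g] .
      have crp: "cmp T c rp \<in> hom T (to A) (to X)" using hom_cmp[OF CT c rp] .
      have toA: "to A \<in> Ob T" using fun_ob[OF F A] .
      have t1: "tm f0 = cmp T (tar T (tm g) (idm T W)) (tm ev)"
        using fg fun_cmp[OF F tar_hom[OF MD g idQ] ev] fun_tar[OF F g idQ] fun_id[OF F Q(1)] Q by simp
      have t2: "tm f0 = cmp T (tar T (cmp T c rp) (idm T W)) (tm ev)"
        using f0(2) key_tm[OF idW c] by simp
      have tgc: "tm g = cmp T c rp"
        using rres_uniq[OF resT toA tg crp] t1 t2
          hom_cmp[OF CT tar_hom[OF MT tg idW] tmev] by metis
      have gd: "g \<in> derivs D tm A (cmp T c rp) X" using g tgc unfolding derivs_def by auto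
      then obtain b where b: "b \<in> derivs D tm A c Y" and bg: "cmp D b lam = g"
        using bj unfolding bij_betw_def by (metis imageE)
      have bY: "b \<in> plus D tm Y x" using b plusY by simp
      have "\<theta> = \<Psi> x b"
      proof (intro ext)
        fix y a
        show "\<theta> y a = \<Psi> x b y a"
        proof (cases "y \<in> wplus_ob D T to W \<and> a \<in> plus D tm Q y")
          case True
          then have y: "y \<in> wplus_ob D T to W" and a: "a \<in> plus D tm Q y" by auto
          obtain B d where yBd: "y = (B, d)" and B: "B \<in> Ob D" and d: "d \<in> hom T (to B) W"
            using y unfolding wplus_ob_def by auto
          have ah: "a \<in> hom D B Q" "tm a = d" using a yBd unfolding plus_def derivs_def by auto
          have tah: "tm a \<in> hom T (to B) W" using fun_hom[OF F ah(1)] Q by simp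
          have ahom: "a \<in> wplus_hom D T tm y y0"
            unfolding wplus_hom_def y0_def yBd using ah id_r[OF CT tah] by simp
          have idA: "idm D A \<in> hom D A A" using hom_id[OF CD A] .
          have "\<theta> y a = \<theta> y (cmp D a (idm D Q))" using id_r[OF CD ah(1)] by simp
          also have "\<dots> = cmp D (tar D (idm D A) a) f0"
            using th2[OF y0 y ahom a0] xAc unfolding f0_def by simp
          also have "\<dots> = cmp D (cmp D (tar D (idm D A) a) (tar D g (idm D Q))) ev"
            using fg assoc[OF CD tar_hom[OF MD idA ah(1)] tar_hom[OF MD g idQ] ev] by simp
          also have "\<dots> = cmp D (tar D (cmp D (idm D A) g) (cmp D a (idm D Q))) ev"
            using interch[OF MD idA g ah(1) idQ] by simp
          also have "\<dots> = cmp D (tar D g a) ev" using id_r[OF CD ah(1)] id_l[OF CD g] by simp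
          finally show ?thesis unfolding \<Psi>_def using True bg by simp
        next
          case False
          then show ?thesis using th3 unfolding \<Psi>_def by auto
        qed
      qed
      thus "\<theta> \<in> \<Psi> x ` plus D tm Y x" using bY by blast
    qed
    show ?thesis unfolding bij_betw_def using inj mem surj by blast
  qed
  have part2: "\<Psi> x' (cmp D h b) = rres_act D T to tm W Q h (\<Psi> x b)"
    if x: "x \<in> wplus_ob D T to W" and x': "x' \<in> wplus_ob D T to W"
      and h: "h \<in> wplus_hom D T tm x' x" and b: "b \<in> plus D tm Y x" for x x' h b
  proof -
    obtain A c where xAc: "x = (A, c)" and A: "A \<in> Ob D"
      using x unfolding wplus_ob_def by auto
    obtain A' c' where xAc': "x' = (A', c')"
      using x' unfolding wplus_ob_def by auto
    have hh: "h \<in> hom D A' A" using h xAc xAc' unfolding wplus_hom_def by auto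
    have bh: "b \<in> hom D A Y" using b xAc unfolding plus_def derivs_def by auto
    have bl: "cmp D b lam \<in> hom D A X" using hom_cmp[OF CD bh lam(1)] .
    show ?thesis
    proof (intro ext)
      fix y a
      show "\<Psi> x' (cmp D h b) y a = rres_act D T to tm W Q h (\<Psi> x b) y a"
      proof (cases "y \<in> wplus_ob D T to W \<and> a \<in> plus D tm Q y")
        case True
        then obtain B d where yBd: "y = (B, d)" and B: "B \<in> Ob D"
          unfolding wplus_ob_def by auto
        have ah: "a \<in> hom D B Q" using True yBd unfolding plus_def derivs_def by auto
        have idB: "idm D B \<in> hom D B B" using hom_id[OF CD B] .
        have "cmp D (tar D h (idm D B)) (cmp D (tar D (cmp D b lam) a) ev)
            = cmp D (cmp D (tar D h (idm D B)) (tar D (cmp D b lam) a)) ev"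
          using assoc[OF CD tar_hom[OF MD hh idB] tar_hom[OF MD bl ah] ev] by simp
        also have "\<dots> = cmp D (tar D (cmp D h (cmp D b lam)) (cmp D (idm D B) a)) ev"
          using interch[OF MD hh bl idB ah] by simp
        also have "\<dots> = cmp D (tar D (cmp D (cmp D h b) lam) a) ev"
          using id_l[OF CD ah] assoc[OF CD hh bh lam(1)] by simp
        finally show ?thesis unfolding \<Psi>_def rres_act_def using True yBd by simp
      next
        case False
        then show ?thesis unfolding \<Psi>_def rres_act_def by auto
      qed
    qed
  qed
  show ?thesis unfolding nat_iso_rres_def using part1 part2 by blast
qed

theorem proposition3p23:
  fixes D :: "('a,'b) mcat" and T :: "('c,'d) mcat"
    and to :: "'a \<Rightarrow> 'c" and tm :: "'b \<Rightarrow> 'd"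
    and W :: 'c and p e :: 'd
  assumes "logical_refinement_system D T to tm"
    and "enough_res_pb D T to tm W p"
    and "is_monoid T W p e"
  shows "(\<forall>P R X ev lp Y lam.
            refines D to P W \<and> refines D to R W \<and> is_left_res D P R X ev \<and>
            left_curry T W p (to X) (tm ev) lp \<and> is_pullback D T to tm lp X Y lam
            \<longrightarrow> (\<exists>\<Phi>. nat_iso_lres D T to tm W p Y P R \<Phi>)) \<and>
         (\<forall>R Q X ev rp Y lam.
            refines D to R W \<and> refines D to Q W \<and> is_right_res D R Q X ev \<and>
            right_curry T W p (to X) (tm ev) rp \<and> is_pullback D T to tm rp X Y lam
            \<longrightarrow> (\<exists>\<Psi>. nat_iso_rres D T to tm W p Y R Q \<Psi>))"
  using left_part[OF assms(1)] right_part[OF assms(1)] by blast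

end
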